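(* Consider a distributed storage system $\mathcal{D}(n,k,d)$ with node storage capacity $\alpha$ and repair bandwidth $\gamma=d\beta$, in the presence of an omniscient active adversary controlling any $b\ge 1$ nodes. If $2b<k$, its resiliency capacity satisfies \[ C_r(\alpha,\gamma)\le\sum_{i=2b+1}^{k}\min\{(d-i+1)\beta,\ \alpha\}. \] If $2b\ge k$, then $C_r(\alpha,\gamma)=0$.
   Context: A distributed storage system (DSS) $\mathcal{D}(n,k,d)$, $k\le d\le n-1$: a source stores a file (a message $m$ from a finite set, all messages equally likely) on $n$ storage nodes, each storing at most $\alpha$ symbols. Nodes fail one at a time; each failed node is replaced by a new node that connects to some $d$ of the remaining $n-1$ active nodes and downloads $\beta=\gamma/d$ symbols from each (symmetric repair), then stores at most $\alpha$ symbols. A data collector connects to any $k$ simultaneously active nodes, downloads their stored contents, and must recover the file. An omniscient adversary knows the file, the storage/repair/decoding schemes and all stored data, and may control any $b$ nodes among all nodes ever in the system (initial nodes and/or replacement nodes, possibly at different times): for a controlled node it may arbitrarily alter the stored data and the messages that node sends to replacement nodes during repair and to data collectors. The resiliency capacity $C_r(\alpha,\gamma)$ is the maximum amount of data (file size, in symbols) that can be stored so that every data collector connecting to any $k$ active nodes, for any failure/repair sequence, recovers the file correctly whatever the adversary's choice of controlled nodes and actions. *)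

theory Defs
  imports Complex_Main "HOL-Library.Extended_Real"
begin

text \<open>Symbols are natural numbers below the alphabet size q.  Storage slots are 0..n-1.
  A failure/repair schedule is a list of steps (f, H): the node in slot f fails and
  the new node in slot f downloads from the helper slots H (|H| = d, f not in H).
  Nodes ever in the system are identified by (creation time, slot): initial nodes
  have creation time 0, the node created at step t (0-based) has creation time t+1.\<close>

type_synonym schedule = "(nat \<times> nat set) list"
type_synonym node_id = "nat \<times> nat"

definition valid_schedule :: "nat \<Rightarrow> nat \<Rightarrow> schedule \<Rightarrow> bool" where
  "valid_schedule n d s \<longleftrightarrow>
     (\<forall>st \<in> set s. fst st < n \<and> snd st \<subseteq> {..<n} - {fst st} \<and> card (snd st) = d)"

text \<open>creation time of the node active in slot j after the first t steps\<close>
primrec act :: "schedule \<Rightarrow> nat \<Rightarrow> nat \<Rightarrow> nat" where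
  "act s 0 j = 0"
| "act s (Suc t) j = (if fst (s ! t) = j then Suc t else act s t j)"

text \<open>All functions may depend on the public
  failure/repair history.
  enc j m: content of initial node j for file m;
  hmsg hist h c: message sent by the helper in slot h storing c (hist includes current step);
  rep hist r: content of the new node given received messages r (indexed by helper slot);
  dec hist K c: file decoded by a data collector from the contents c of the slots in K.\<close>
record scheme =
  enc :: "nat \<Rightarrow> nat \<Rightarrow> nat list"
  hmsg :: "schedule \<Rightarrow> nat \<Rightarrow> nat list \<Rightarrow> nat list"
  rep :: "schedule \<Rightarrow> (nat \<Rightarrow> nat list) \<Rightarrow> nat list"
  dec :: "schedule \<Rightarrow> nat set \<Rightarrow> (nat \<Rightarrow> nat list) \<Rightarrow> nat"

definition valid_word :: "nat \<Rightarrow> nat \<Rightarrow> nat list \<Rightarrow> bool" where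
  "valid_word q l xs \<longleftrightarrow> length xs = l \<and> set xs \<subseteq> {..<q}"

text \<open>Honest stored content of the node active in slot j after t steps, when the file is m,
  the adversary controls the node set B and sends am t x (instead of the honest message)
  from a controlled node x acting as helper at step t.\<close>
primrec stored ::
  "scheme \<Rightarrow> schedule \<Rightarrow> nat \<Rightarrow> node_id set \<Rightarrow> (nat \<Rightarrow> node_id \<Rightarrow> nat list)
     \<Rightarrow> nat \<Rightarrow> nat \<Rightarrow> nat list" where
  "stored S s m B am 0 j = enc S j m"
| "stored S s m B am (Suc t) j =
     (if j = fst (s ! t) then
        rep S (take (Suc t) s)
          (\<lambda>h. if h \<in> snd (s ! t) then
                 (if (act s t h, h) \<in> B then am t (act s t h, h)
                  else hmsg S (take (Suc t) s) h (stored S s m B am t h))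
               else [])
      else stored S s m B am t j)"

text \<open>Content reported to a data collector by slot j at the end of schedule s
  (a controlled node reports ac x instead).\<close>
definition reported ::
  "scheme \<Rightarrow> schedule \<Rightarrow> nat \<Rightarrow> node_id set \<Rightarrow> (nat \<Rightarrow> node_id \<Rightarrow> nat list)
     \<Rightarrow> (node_id \<Rightarrow> nat list) \<Rightarrow> nat \<Rightarrow> nat list" where
  "reported S s m B am ac j =
     (if (act s (length s) j, j) \<in> B then ac (act s (length s) j, j)
      else stored S s m B am (length s) j)"

text \<open>S is a valid scheme over alphabet size q storing M messages, node storage alpha,
  per-helper download beta, which is resilient against b controlled nodes.\<close>
definition resilient_scheme ::
  "nat \<Rightarrow> nat \<Rightarrow> nat \<Rightarrow> nat \<Rightarrow> nat \<Rightarrow> nat \<Rightarrow> nat \<Rightarrow> nat \<Rightarrow> scheme \<Rightarrow> bool" where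
  "resilient_scheme n k d b \<alpha> \<beta> q M S \<longleftrightarrow>
     (\<forall>j m. j < n \<longrightarrow> m < M \<longrightarrow> valid_word q \<alpha> (enc S j m)) \<and>
     (\<forall>hist h c. valid_word q \<beta> (hmsg S hist h c)) \<and>
     (\<forall>hist r. valid_word q \<alpha> (rep S hist r)) \<and>
     (\<forall>s m B am ac K.
        valid_schedule n d s \<longrightarrow> m < M \<longrightarrow> finite B \<longrightarrow> card B \<le> b \<longrightarrow>
        (\<forall>t x. valid_word q \<beta> (am t x)) \<longrightarrow> (\<forall>x. valid_word q \<alpha> (ac x)) \<longrightarrow>
        K \<subseteq> {..<n} \<longrightarrow> card K = k \<longrightarrow>
        dec S s K (\<lambda>j. if j \<in> K then reported S s m B am ac j else []) = m)"

text \<open>Resiliency capacity (file size log_q M in symbols), with gamma = d * beta.\<close>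
definition resiliency_capacity ::
  "nat \<Rightarrow> nat \<Rightarrow> nat \<Rightarrow> nat \<Rightarrow> nat \<Rightarrow> nat \<Rightarrow> ereal" where
  "resiliency_capacity n k d b \<alpha> \<beta> =
     Sup {ereal (log (real q) (real M)) | q M S.
            2 \<le> q \<and> 1 \<le> M \<and> resilient_scheme n k d b \<alpha> \<beta> q M S}"

end

theory Submission
  imports Defs
begin

lemma stored_unrep:
  "(\<forall>u<t. fst (s!u) \<noteq> j) \<Longrightarrow> stored S s m B am t j = enc S j m"
  by (induction t) auto

lemma act_unrep:
  "(\<forall>u<t. fst (s!u) \<noteq> j) \<Longrightarrow> act s t j = 0"
  by (induction t) auto

lemma concat_inj:
  "concat xs = concat ys \<Longrightarrow> map length xs = map length ys \<Longrightarrow> xs = ys"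
proof (induction xs arbitrary: ys)
  case Nil then show ?case by simp
next
  case (Cons x xs)
  then obtain y ys' where ys: "ys = y # ys'" by (cases ys) auto
  with Cons.prems have "length x = length y" by simp
  with Cons.prems ys have "x = y" "concat xs = concat ys'" by auto
  with Cons ys show ?case by simp
qed

lemma sum_filter_split:
  fixes g h :: "nat \<Rightarrow> nat"
  shows "sum_list (map g (filter P xs)) + sum_list (map h (filter (\<lambda>x. \<not> P x) xs))
   = sum_list (map (\<lambda>x. if P x then g x else h x) (xs::nat list))"
  by (induction xs) (auto simp: algebra_simps)

lemma len_concat_const:
  "(\<forall>x\<in>set xs. length (f x) = c) \<Longrightarrow> length (concat (map f xs)) = c * length xs"
  by (induction xs) auto

lemma len_concat_map: "length (concat (map f xs)) = sum_list (map (\<lambda>x. length (f x)) xs)"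
  by (induction xs) auto

lemma main_bound:
  assumes kd: "k \<le> d" and dn: "d + 1 \<le> n"
    and R: "resilient_scheme n k d b \<alpha> \<beta> q M S"
  shows "M \<le> q ^ (\<Sum>i\<in>{min (2*b) k..<k}. min ((d - i) * \<beta>) \<alpha>)"
proof -
  define c where "c = min (2*b) k"
  define b1 where "b1 = min b k"
  define P where "P i \<longleftrightarrow> (d - i) * \<beta> < \<alpha>" for i
  define rs where "rs = filter P [c..<k]"
  define as where "as = filter (\<lambda>i. \<not> P i) [c..<k]"
  define s :: schedule where "s = map (\<lambda>i. (i, {..d} - {i})) rs"
  define w where "w m t j = hmsg S (take (Suc t) s) j (enc S j m)" for m t j
  define sig where "sig m = concat (map (\<lambda>i. enc S i m) as) @
       concat (map (\<lambda>t. concat (map (\<lambda>j. w m t j) [Suc (rs!t)..<Suc d])) [0..<length rs])" for m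
  define L where "L = (\<Sum>i\<in>{c..<k}. min ((d - i) * \<beta>) \<alpha>)"
  note Rc = R[unfolded resilient_scheme_def]
  have encv: "\<And>j m. j < n \<Longrightarrow> m < M \<Longrightarrow> valid_word q \<alpha> (enc S j m)"
    using Rc by blast
  have hv: "\<And>hist h c. valid_word q \<beta> (hmsg S hist h c)"
    using Rc by blast
  note decok = Rc[THEN conjunct2, THEN conjunct2, THEN conjunct2, rule_format]
  have rs_set: "set rs = {i. c \<le> i \<and> i < k \<and> P i}" unfolding rs_def by auto
  have rs_sorted: "sorted_wrt (<) rs" unfolding rs_def by (intro sorted_wrt_filter sorted_wrt_upt)
  have rs_lt: "\<And>u v. u < v \<Longrightarrow> v < length rs \<Longrightarrow> rs!u < rs!v"
    using rs_sorted by (simp add: sorted_wrt_iff_nth_less)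
  have rs_nth: "\<And>u. u < length rs \<Longrightarrow> c \<le> rs!u \<and> rs!u < k"
    using rs_set nth_mem by blast
  have s_nth: "\<And>u. u < length rs \<Longrightarrow> s!u = (rs!u, {..d} - {rs!u})" unfolding s_def by simp
  have len_s: "length s = length rs" unfolding s_def by simp
  have sched: "valid_schedule n d s"
    unfolding valid_schedule_def
  proof
    fix st assume "st \<in> set s"
    then obtain i where i: "i \<in> set rs" and st: "st = (i, {..d} - {i})" unfolding s_def by auto
    from i rs_set kd have "i \<le> d" by auto
    then have "card ({..d} - {i}) = d" by (simp add: card_Diff_singleton)
    moreover have "i < n" "{..d} - {i} \<subseteq> {..<n} - {i}" using \<open>i \<le> d\<close> dn by auto
    ultimately show "fst st < n \<and> snd st \<subseteq> {..<n} - {fst st} \<and> card (snd st) = d" using st by simp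
  qed
  have rs_s: "\<And>u. u < length rs \<Longrightarrow> fst (s!u) = rs!u" using s_nth by simp
  have unrepA: "\<And>t j mm B am. t \<le> length rs \<Longrightarrow> (\<forall>u<t. rs!u \<noteq> j) \<Longrightarrow>
       stored S s mm B am t j = enc S j mm"
    by (rule stored_unrep) (use rs_s in fastforce)
  have unact: "\<And>t j. t \<le> length rs \<Longrightarrow> (\<forall>u<t. rs!u \<noteq> j) \<Longrightarrow> act s t j = 0"
    by (rule act_unrep) (use rs_s in fastforce)
  have low_unrep: "\<And>t j. j < c \<Longrightarrow> t \<le> length rs \<Longrightarrow> \<forall>u<t. rs!u \<noteq> j"
  proof (intro allI impI)
    fix t j u assume "j < c" "t \<le> length rs" "u < t"
    then show "rs!u \<noteq> j" using rs_nth[of u] by auto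
  qed
  have kn: "k < n" using kd dn by simp
  have as_set: "set as = {i. c \<le> i \<and> i < k \<and> \<not> P i}" unfolding as_def by auto
  have lenw: "\<And>m t j. length (w m t j) = \<beta>" using hv unfolding w_def valid_word_def by blast
  have lwc: "\<And>mm t xs. length (concat (map (\<lambda>j. w mm t j) xs)) = \<beta> * length xs"
    by (intro len_concat_const) (simp add: lenw)
  have inj: "inj_on sig {..<M}"
  proof (rule inj_onI)
    fix m m' assume m: "m \<in> {..<M}" and m': "m' \<in> {..<M}" and eq: "sig m = sig m'"
    have lenenc: "\<And>i mm. i \<in> set as \<Longrightarrow> mm \<in> {..<M} \<Longrightarrow> length (enc S i mm) = \<alpha>"
      using encv as_set kn unfolding valid_word_def by auto
    have "length (concat (map (\<lambda>i. enc S i m) as)) = length (concat (map (\<lambda>i. enc S i m') as))"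
      using len_concat_const[of as "\<lambda>i. enc S i m" \<alpha>] len_concat_const[of as "\<lambda>i. enc S i m'" \<alpha>] lenenc m m' by simp
    with eq have e1: "concat (map (\<lambda>i. enc S i m) as) = concat (map (\<lambda>i. enc S i m') as)"
      and e2: "concat (map (\<lambda>t. concat (map (\<lambda>j. w m t j) [Suc (rs!t)..<Suc d])) [0..<length rs])
             = concat (map (\<lambda>t. concat (map (\<lambda>j. w m' t j) [Suc (rs!t)..<Suc d])) [0..<length rs])"
      unfolding sig_def by auto
    have "map (\<lambda>i. enc S i m) as = map (\<lambda>i. enc S i m') as"
      by (rule concat_inj[OF e1]) (use lenenc m m' in simp)
    then have encEq: "\<And>i. c \<le> i \<Longrightarrow> i < k \<Longrightarrow> \<not> P i \<Longrightarrow> enc S i m = enc S i m'"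
      using as_set by (auto simp: map_eq_conv)
    have "map (\<lambda>t. concat (map (\<lambda>j. w m t j) [Suc (rs!t)..<Suc d])) [0..<length rs]
        = map (\<lambda>t. concat (map (\<lambda>j. w m' t j) [Suc (rs!t)..<Suc d])) [0..<length rs]"
      by (rule concat_inj[OF e2]) (simp add: lwc)
    then have ce: "\<And>t. t < length rs \<Longrightarrow> concat (map (\<lambda>j. w m t j) [Suc (rs!t)..<Suc d])
                = concat (map (\<lambda>j. w m' t j) [Suc (rs!t)..<Suc d])"
      by (simp add: map_eq_conv)
    have me: "map (\<lambda>j. w m t j) [Suc (rs!t)..<Suc d] = map (\<lambda>j. w m' t j) [Suc (rs!t)..<Suc d]"
      if "t < length rs" for t
    proof (rule concat_inj[OF ce[OF that]])
      show "map length (map (\<lambda>j. w m t j) [Suc (rs!t)..<Suc d]) = map length (map (\<lambda>j. w m' t j) [Suc (rs!t)..<Suc d])"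
        by (simp add: lenw map_eq_conv)
    qed
    then have msgEq: "\<And>t j. t < length rs \<Longrightarrow> rs!t < j \<Longrightarrow> j \<le> d \<Longrightarrow> w m t j = w m' t j"
    proof -
      fix t j assume a: "t < length rs" "rs!t < j" "j \<le> d"
      then have "j \<in> set [Suc (rs!t)..<Suc d]" by auto
      then show "w m t j = w m' t j" using me[OF a(1)] by (simp only: map_eq_conv)
    qed
    define BA where "BA = (\<lambda>j. (0::nat, j)) ` {..<b1}"
    define BB where "BB = (\<lambda>j. (0::nat, j)) ` {b1..<c}"
    define amA where "amA t x = hmsg S (take (Suc t) s) (snd x) (enc S (snd x) m')" for t and x :: node_id
    define amB where "amB t x = hmsg S (take (Suc t) s) (snd x) (enc S (snd x) m)" for t and x :: node_id
    define acA where "acA x = enc S (if snd x < n then snd x else 0) m'" for x :: node_id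
    define acB where "acB x = enc S (if snd x < n then snd x else 0) m" for x :: node_id
    have b1c: "b1 \<le> c" unfolding b1_def c_def by simp
    have inBA: "\<And>a h. (a, h) \<in> BA \<longleftrightarrow> a = 0 \<and> h < b1" unfolding BA_def by auto
    have inBB: "\<And>a h. (a, h) \<in> BB \<longleftrightarrow> a = 0 \<and> b1 \<le> h \<and> h < c" unfolding BB_def by auto
    have Inv: "t \<le> length rs \<Longrightarrow> c \<le> j \<Longrightarrow> j < k \<Longrightarrow> (j \<notin> set rs \<or> (\<exists>u<t. rs!u = j)) \<Longrightarrow>
       stored S s m BA amA t j = stored S s m' BB amB t j" for t j
    proof (induction t arbitrary: j)
      case 0
      then have "\<not> P j" using rs_set by auto
      then show ?case using encEq 0 by simp
    next
      case (Suc t)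
      define i where "i = rs!t"
      have tl: "t < length rs" using Suc.prems by simp
      have st: "s!t = (i, {..d} - {i})" using s_nth tl i_def by simp
      show ?case
      proof (cases "j = i")
        case False
        then have "j \<notin> set rs \<or> (\<exists>u<t. rs!u = j)" using Suc.prems(4) i_def less_Suc_eq by auto
        then show ?thesis using Suc.IH[of j] Suc.prems False st by simp
      next
        case True
        have msg: "(if (act s t h, h) \<in> BA then amA t (act s t h, h)
                 else hmsg S (take (Suc t) s) h (stored S s m BA amA t h)) =
              (if (act s t h, h) \<in> BB then amB t (act s t h, h)
                 else hmsg S (take (Suc t) s) h (stored S s m' BB amB t h))"
          if h: "h \<in> {..d} - {i}" for h
        proof (cases "h < c")
          case True
          have nu: "\<forall>u<t. rs!u \<noteq> h" using low_unrep[OF True, of t] tl by simp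
          have "act s t h = 0" using unact[OF _ nu] tl by simp
          moreover have "stored S s m BA amA t h = enc S h m" "stored S s m' BB amB t h = enc S h m'"
            using unrepA[OF _ nu] tl by auto
          ultimately show ?thesis using True inBA inBB unfolding amA_def amB_def by auto
        next
          case False
          then have nA: "(act s t h, h) \<notin> BA" "(act s t h, h) \<notin> BB" using inBA inBB b1c by auto
          have "stored S s m BA amA t h = stored S s m' BB amB t h
             \<or> hmsg S (take (Suc t) s) h (stored S s m BA amA t h)
                 = hmsg S (take (Suc t) s) h (stored S s m' BB amB t h)"
          proof (cases "h < i")
            case True
            have hk: "h < k" using True rs_nth tl i_def by fastforce
            have "h \<notin> set rs \<or> (\<exists>u<t. rs!u = h)"
            proof (cases "h \<in> set rs")
              case True
              then obtain u where u: "u < length rs" "rs!u = h" by (auto simp: in_set_conv_nth)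
              have "u < t"
              proof (rule ccontr)
                assume "\<not> u < t"
                then have "t \<le> u" by simp
                then have "rs!t \<le> rs!u" using rs_lt u(1) by (cases "t = u") (auto simp: less_imp_le)
                then show False using u(2) \<open>h < i\<close> i_def by simp
              qed
              then show ?thesis using u by auto
            qed simp
            then show ?thesis using Suc.IH[of h] False hk tl by simp
          next
            case False
            then have hi: "i < h" using h by auto
            have nu: "\<forall>u<t. rs!u \<noteq> h" using rs_lt tl hi i_def by fastforce
            have "stored S s m BA amA t h = enc S h m" "stored S s m' BB amB t h = enc S h m'"
              using unrepA[OF _ nu] tl by auto
            moreover have "w m t h = w m' t h" using msgEq[OF tl] hi i_def h by auto
            ultimately show ?thesis unfolding w_def by simp
          qed
          then show ?thesis using nA by auto
        qed
        show ?thesis using True st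
          by (simp add: msg cong: if_cong)
      qed
    qed
    have finInv: "stored S s m BA amA (length s) j = stored S s m' BB amB (length s) j"
      if "c \<le> j" "j < k" for j
      using Inv[of "length rs" j] that len_s by (auto simp: in_set_conv_nth)
    have lowst: "stored S s mm B am (length s) j = enc S j mm" if "j < c" for j mm B am
      using unrepA[of "length s" j] low_unrep[OF that, of "length s"] len_s by simp
    have lowact: "act s (length s) j = 0" if "j < c" for j
      using unact[of "length s" j] low_unrep[OF that, of "length s"] len_s by simp
    have repEq: "(\<lambda>j. if j \<in> {..<k} then reported S s m BA amA acA j else [])
               = (\<lambda>j. if j \<in> {..<k} then reported S s m' BB amB acB j else [])"
    proof (rule ext)
      fix j
      show "(if j \<in> {..<k} then reported S s m BA amA acA j else [])
          = (if j \<in> {..<k} then reported S s m' BB amB acB j else [])"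
      proof (cases "j < k")
        case jk: True
        show ?thesis
        proof (cases "j < c")
          case True
          have "j < n" using jk kn by simp
          then show ?thesis using True lowst[OF True] lowact[OF True] inBA inBB
            unfolding reported_def acA_def acB_def by auto
        next
          case False
          then have "(act s (length s) j, j) \<notin> BA" "(act s (length s) j, j) \<notin> BB"
            using inBA inBB b1c by auto
          then show ?thesis using finInv[of j] False jk unfolding reported_def by simp
        qed
      qed simp
    qed
    have finA: "finite BA" "finite BB" unfolding BA_def BB_def by auto
    have cardA: "card BA \<le> b"
    proof -
      have "card BA \<le> card {..<b1}" unfolding BA_def by (rule card_image_le) simp
      then show ?thesis unfolding b1_def by simp
    qed
    have cardB: "card BB \<le> b"
    proof -
      have "card BB \<le> card {b1..<c}" unfolding BB_def by (rule card_image_le) simp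
      then show ?thesis unfolding b1_def c_def by simp
    qed
    have amv: "\<forall>t x. valid_word q \<beta> (amA t x)" "\<forall>t x. valid_word q \<beta> (amB t x)"
      unfolding amA_def amB_def using hv by auto
    have n0: "0 < n" using dn by simp
    have acv: "\<forall>x. valid_word q \<alpha> (acA x)" "\<forall>x. valid_word q \<alpha> (acB x)"
      unfolding acA_def acB_def using encv m m' n0 by auto
    have Kn: "{..<k} \<subseteq> {..<n}" using kn by auto
    have "dec S s {..<k} (\<lambda>j. if j \<in> {..<k} then reported S s m BA amA acA j else []) = m"
      by (rule decok[OF sched _ finA(1) cardA amv(1)[rule_format] acv(1)[rule_format] Kn]) (use m in auto)
    moreover have "dec S s {..<k} (\<lambda>j. if j \<in> {..<k} then reported S s m' BB amB acB j else []) = m'"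
      by (rule decok[OF sched _ finA(2) cardB amv(2)[rule_format] acv(2)[rule_format] Kn]) (use m' in auto)
    ultimately show "m = m'" using repEq by simp
  qed
  have lensig: "length (sig m) = L" if m: "m < M" for m
  proof -
    have "length (concat (map (\<lambda>i. enc S i m) as)) = \<alpha> * length as"
      by (rule len_concat_const) (use encv m as_set kn in \<open>auto simp: valid_word_def\<close>)
    moreover have "length (concat (map (\<lambda>t. concat (map (\<lambda>j. w m t j) [Suc (rs!t)..<Suc d])) [0..<length rs]))
        = sum_list (map (\<lambda>t. (d - rs!t) * \<beta>) [0..<length rs])"
    proof -
      have inner: "\<And>t. length (concat (map (\<lambda>j. w m t j) [Suc (rs!t)..<Suc d])) = (d - rs!t) * \<beta>"
        by (simp only: lwc length_upt) simp
      show ?thesis by (subst len_concat_map) (simp only: inner)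
    qed
    moreover have "map (\<lambda>t. (d - rs!t) * \<beta>) [0..<length rs] = map (\<lambda>i. (d - i) * \<beta>) rs"
      by (rule nth_equalityI) auto
    moreover have "sum_list (map (\<lambda>i. (d - i) * \<beta>) rs) + sum_list (map (\<lambda>i. \<alpha>) as)
        = sum_list (map (\<lambda>i. if P i then (d - i) * \<beta> else \<alpha>) [c..<k])"
      unfolding rs_def as_def by (rule sum_filter_split)
    moreover have "(\<lambda>i. if P i then (d - i) * \<beta> else \<alpha>) = (\<lambda>i. min ((d - i) * \<beta>) \<alpha>)"
      unfolding P_def by auto
    moreover have "sum_list (map (\<lambda>i. \<alpha>) as) = \<alpha> * length as" by (simp add: sum_list_triv)
    moreover have "L = (\<Sum>i\<leftarrow>[c..<k]. min ((d - i) * \<beta>) \<alpha>)"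
      unfolding L_def by (simp add: interv_sum_list_conv_sum_set_nat)
    ultimately show ?thesis unfolding sig_def by simp
  qed
  have setsig: "set (sig m) \<subseteq> {..<q}" if m: "m < M" for m
  proof -
    have "set (enc S i m) \<subseteq> {..<q}" if "i \<in> set as" for i
      using encv[of i m] m as_set kn that by (auto simp: valid_word_def)
    then have "set (concat (map (\<lambda>i. enc S i m) as)) \<subseteq> {..<q}" by auto
    moreover have "set (w m t j) \<subseteq> {..<q}" for t j using hv unfolding w_def valid_word_def by blast
    ultimately show ?thesis unfolding sig_def by (auto simp del: upt_Suc) blast+
  qed
  have img: "sig ` {..<M} \<subseteq> {xs. set xs \<subseteq> {..<q} \<and> length xs = L}"
    using lensig setsig by auto
  have "M = card (sig ` {..<M})" using card_image[OF inj] by simp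
  also have "\<dots> \<le> card {xs. set xs \<subseteq> {..<q} \<and> length xs = L}"
    by (rule card_mono[OF _ img]) (simp add: finite_lists_length_eq)
  also have "\<dots> = q ^ L" by (simp add: card_lists_length_eq)
  finally show ?thesis unfolding L_def c_def .
qed

lemma cap_upper:
  assumes kd: "k \<le> d" and dn: "d + 1 \<le> n"
  shows "resiliency_capacity n k d b \<alpha> \<beta>
           \<le> ereal (real (\<Sum>i\<in>{min (2*b) k..<k}. min ((d - i) * \<beta>) \<alpha>))"
  unfolding resiliency_capacity_def
proof (rule Sup_least)
  fix x assume "x \<in> {ereal (log (real q) (real M)) | q M S.
            2 \<le> q \<and> 1 \<le> M \<and> resilient_scheme n k d b \<alpha> \<beta> q M S}"
  then obtain q M S where x: "x = ereal (log (real q) (real M))" and q: "2 \<le> q" and M: "1 \<le> M"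
    and R: "resilient_scheme n k d b \<alpha> \<beta> q M S" by blast
  define L where "L = (\<Sum>i\<in>{min (2*b) k..<k}. min ((d - i) * \<beta>) \<alpha>)"
  have "M \<le> q ^ L" using main_bound[OF kd dn R] unfolding L_def .
  then have "real M \<le> real q ^ L" by (metis of_nat_le_iff of_nat_power)
  then have "log (real q) (real M) \<le> log (real q) (real q ^ L)"
    using q M by (subst log_le_cancel_iff) auto
  also have "\<dots> = real L" using q by (simp add: log_nat_power)
  finally show "x \<le> ereal (real L)" using x by simp
qed

lemma trivial_scheme:
  "resilient_scheme n k d b \<alpha> \<beta> 2 1
     \<lparr>enc = \<lambda>j m. replicate \<alpha> 0, hmsg = \<lambda>h x c. replicate \<beta> 0,
      rep = \<lambda>h r. replicate \<alpha> 0, dec = \<lambda>s K c. 0\<rparr>"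
  unfolding resilient_scheme_def valid_word_def by auto

lemma cap_nonneg: "0 \<le> resiliency_capacity n k d b \<alpha> \<beta>"
  unfolding resiliency_capacity_def
proof (rule Sup_upper2)
  show "ereal (log (real 2) (real 1)) \<in> {ereal (log (real q) (real M)) | q M S.
            2 \<le> q \<and> 1 \<le> M \<and> resilient_scheme n k d b \<alpha> \<beta> q M S}"
    using trivial_scheme by blast
qed simp

theorem theorem3:
  fixes n k d b \<alpha> \<beta> :: nat
  assumes "k \<le> d" and "d + 1 \<le> n" and "1 \<le> b"
  shows "(2 * b < k \<longrightarrow>
            resiliency_capacity n k d b \<alpha> \<beta>
              \<le> ereal (real (\<Sum>i\<in>{2*b+1..k}. min ((d + 1 - i) * \<beta>) \<alpha>)))
       \<and> (k \<le> 2 * b \<longrightarrow> resiliency_capacity n k d b \<alpha> \<beta> = 0)"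
proof (intro conjI impI)
  assume lt: "2 * b < k"
  have "(\<Sum>i\<in>{2*b+1..k}. min ((d + 1 - i) * \<beta>) \<alpha>) = (\<Sum>i\<in>{Suc (2*b)..<Suc k}. min ((d + 1 - i) * \<beta>) \<alpha>)"
    by (simp add: atLeastLessThanSuc_atLeastAtMost)
  also have "\<dots> = (\<Sum>i\<in>{2*b..<k}. min ((d - i) * \<beta>) \<alpha>)"
    by (subst sum.shift_bounds_Suc_ivl) simp
  also have "\<dots> = (\<Sum>i\<in>{min (2*b) k..<k}. min ((d - i) * \<beta>) \<alpha>)" using lt by simp
  finally show "resiliency_capacity n k d b \<alpha> \<beta>
              \<le> ereal (real (\<Sum>i\<in>{2*b+1..k}. min ((d + 1 - i) * \<beta>) \<alpha>))"
    using cap_upper[OF assms(1,2)] by simp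
next
  assume le: "k \<le> 2 * b"
  have "resiliency_capacity n k d b \<alpha> \<beta> \<le> 0"
    using cap_upper[OF assms(1,2), of b \<alpha> \<beta>] le by (simp add: zero_ereal_def)
  then show "resiliency_capacity n k d b \<alpha> \<beta> = 0" using cap_nonneg by (metis order_antisym)
qed

end
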